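(* Assume the setting and Assumption $( * )$ described in the context. Let $T\in(t_0,\infty)$ and let $(y,w)$ be a solution of the integrated Maxey–Riley system on $[t_0,T)$. Then: (i) there exists a constant $C>0$ such that for all $t_1,t_2$ with $t_0<t_1<t_2<T$, $\left|\int_{t_0}^{t_2}\frac{w(s)}{\sqrt{t_2-s}}\,ds-\int_{t_0}^{t_1}\frac{w(s)}{\sqrt{t_1-s}}\,ds\right|\le C|t_2-t_1|^{1/2}$; (ii) if $w(t_0)=0$, then the limit $\lim_{t\to t_0^+}\frac{w(t)}{\sqrt{t-t_0}}$ exists and equals $0$.
   Context: Fix $n\ge 1$, a domain $\mathscr{D}\subseteq\mathbb{R}^n$, an initial time $t_0\ge 0$, a velocity field $u:\mathscr{D}\times[0,\infty)\to\mathbb{R}^n$, real constants $R,\mu,\kappa,\gamma>0$ and a constant vector $g\in\mathbb{R}^n$. Write $\frac{D}{Dt}=\partial_t+(u\cdot\nabla)$ and define $A_u,B_u:\mathscr{D}\times[t_0,\infty)\to\mathbb{R}^n$, $M_u:\mathscr{D}\times[t_0,\infty)\to\mathbb{R}^{n\times n}$ by $A_u=u+\frac{\gamma}{6}\mu^{-1}\Delta u$, $M_u=\nabla u+\frac{\gamma}{6}\mu^{-1}\nabla\Delta u$, $B_u=\left(\frac{3R}{2}-1\right)\left(\frac{Du}{Dt}-g\right)+\left(\frac{R}{20}-\frac16\right)\gamma\mu^{-1}\frac{D}{Dt}\Delta u-\frac{\gamma}{6}\mu^{-1}\left(\nabla u+\frac{\gamma}{6}\mu^{-1}\nabla\Delta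 u\right)\Delta u$. The integrated Maxey–Riley system is $y(t)=y_0+\int_{t_0}^t\big(w(s)+A_u(y(s),s)\big)\,ds$, $w(t)=w_0+\int_{t_0}^t\Big(-\mu w(s)-M_u(y(s),s)w(s)-\kappa\mu^{1/2}\frac{w(s)}{\sqrt{t-s}}+B_u(y(s),s)\Big)\,ds$. A solution on $[t_0,T)$ with initial condition $(y_0,w_0)$ is a pair of continuous maps $y:[t_0,T)\to\mathscr{D}$, $w:[t_0,T)\to\mathbb{R}^n$ satisfying both equations for every $t\in[t_0,T)$. Assumption $( * )$: $u$ is smooth enough that the first-order partial derivatives in time and space of $A_u$ and $B_u$ exist, are continuous, and are uniformly bounded in time and space, i.e. there is $L_b$ with $\|\partial_tA_u\|_\infty,\|\nabla A_u\|_\infty,\|\partial_tB_u\|_\infty,\|\nabla B_u\|_\infty<L_b$. *)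

theory Defs
  imports "HOL-Analysis.Analysis"
begin

definition pdx :: "(real^'n \<Rightarrow> real \<Rightarrow> 'b::real_normed_vector) \<Rightarrow> 'n \<Rightarrow> real^'n \<Rightarrow> real \<Rightarrow> 'b" where
  "pdx f i x t = vector_derivative (\<lambda>h. f (x + h *\<^sub>R axis i 1) t) (at 0)"

definition pdt :: "(real^'n \<Rightarrow> real \<Rightarrow> 'b::real_normed_vector) \<Rightarrow> real^'n \<Rightarrow> real \<Rightarrow> 'b" where
  "pdt f x t = vector_derivative (\<lambda>s. f x s) (at t within {0..})"

definition lap :: "(real^'n \<Rightarrow> real \<Rightarrow> real^'n) \<Rightarrow> real^'n \<Rightarrow> real \<Rightarrow> real^'n" where
  "lap f x t = (\<Sum>i\<in>UNIV. pdx (pdx f i) i x t)"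

text \<open>Gradient of a vector field as the Jacobian matrix: (grad f)_{ij} = d_j f_i,
  so that (grad f) v = (v . nabla) f.\<close>
definition jac :: "(real^'n \<Rightarrow> real \<Rightarrow> real^'n) \<Rightarrow> real^'n \<Rightarrow> real \<Rightarrow> real^'n^'n" where
  "jac f x t = (\<chi> i j. pdx f j x t $ i)"

definition matd :: "(real^'n \<Rightarrow> real \<Rightarrow> real^'n) \<Rightarrow> (real^'n \<Rightarrow> real \<Rightarrow> real^'n) \<Rightarrow> real^'n \<Rightarrow> real \<Rightarrow> real^'n" where
  "matd u f x t = pdt f x t + (\<Sum>j\<in>UNIV. (u x t $ j) *\<^sub>R pdx f j x t)"

definition A_u :: "real \<Rightarrow> real \<Rightarrow> (real^'n \<Rightarrow> real \<Rightarrow> real^'n) \<Rightarrow> real^'n \<Rightarrow> real \<Rightarrow> real^'n" where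
  "A_u \<mu> \<gamma> u x t = u x t + (\<gamma> / 6 / \<mu>) *\<^sub>R lap u x t"

definition M_u :: "real \<Rightarrow> real \<Rightarrow> (real^'n \<Rightarrow> real \<Rightarrow> real^'n) \<Rightarrow> real^'n \<Rightarrow> real \<Rightarrow> real^'n^'n" where
  "M_u \<mu> \<gamma> u x t = jac u x t + (\<gamma> / 6 / \<mu>) *\<^sub>R jac (lap u) x t"

definition B_u :: "real \<Rightarrow> real \<Rightarrow> real \<Rightarrow> real^'n \<Rightarrow> (real^'n \<Rightarrow> real \<Rightarrow> real^'n) \<Rightarrow> real^'n \<Rightarrow> real \<Rightarrow> real^'n" where
  "B_u R \<mu> \<gamma> g u x t =
     (3 * R / 2 - 1) *\<^sub>R (matd u u x t - g)
     + ((R / 20 - 1 / 6) * \<gamma> / \<mu>) *\<^sub>R matd u (lap u) x t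
     - (\<gamma> / 6 / \<mu>) *\<^sub>R (M_u \<mu> \<gamma> u x t *v lap u x t)"

definition C1_bounded :: "(real^'n) set \<Rightarrow> real \<Rightarrow> real \<Rightarrow> (real^'n \<Rightarrow> real \<Rightarrow> real^'n) \<Rightarrow> bool" where
  "C1_bounded D t0 Lb F \<longleftrightarrow>
     (\<exists>DF :: 'n \<Rightarrow> real^'n \<Rightarrow> real \<Rightarrow> real^'n. \<exists>DFt :: real^'n \<Rightarrow> real \<Rightarrow> real^'n.
        (\<forall>x\<in>D. \<forall>t\<ge>t0.
           (\<forall>i. ((\<lambda>h. F (x + h *\<^sub>R axis i 1) t) has_vector_derivative DF i x t) (at 0))
           \<and> ((\<lambda>s. F x s) has_vector_derivative DFt x t) (at t within {t0..})
           \<and> (\<forall>i. norm (DF i x t) < Lb) \<and> norm (DFt x t) < Lb)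
        \<and> (\<forall>i. continuous_on (D \<times> {t0..}) (\<lambda>p. DF i (fst p) (snd p)))
        \<and> continuous_on (D \<times> {t0..}) (\<lambda>p. DFt (fst p) (snd p)))"

end

theory Submission
  imports Defs
begin



lemma vd_none:
  assumes "\<not> (\<exists>d. (f has_vector_derivative d) F)"
  shows "vector_derivative f F = (SOME d. False)"
proof -
  have "(\<lambda>d. (f has_vector_derivative d) F) = (\<lambda>d. False)" using assms by auto
  then show ?thesis unfolding vector_derivative_def by simp
qed

lemma hvd_scale:
  "(g has_vector_derivative g') F \<Longrightarrow> ((\<lambda>x. c *\<^sub>R g x) has_vector_derivative c *\<^sub>R g') F"
  by (rule bounded_linear.has_vector_derivative[OF bounded_linear_scaleR_right])

lemma column_M:
  "column j (M_u \<mu> \<gamma> u x t) = pdx u j x t + (\<gamma> / 6 / \<mu>) *\<^sub>R pdx (lap u) j x t"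
  by (simp add: vec_eq_iff column_def M_u_def jac_def)

lemma M_col_bound:
  fixes u :: "real^'n \<Rightarrow> real \<Rightarrow> real^'n"
  assumes "C1_bounded D t0 Lb (A_u \<mu> \<gamma> u)" "x \<in> D" "t \<ge> t0" "\<mu> > 0" "\<gamma> > 0"
  shows "norm (column j (M_u \<mu> \<gamma> u x t)) \<le> max Lb ((1 + \<gamma>/6/\<mu>) * norm (SOME d::real^'n. False))"
proof -
  define c where "c = \<gamma>/6/\<mu>"
  have c: "c > 0" using assms by (simp add: c_def)
  obtain DF where DF: "((\<lambda>h. A_u \<mu> \<gamma> u (x + h *\<^sub>R axis j 1) t) has_vector_derivative DF) (at 0)" "norm DF < Lb"
    using assms(1-3) unfolding C1_bounded_def by blast
  define f where "f = (\<lambda>h. u (x + h *\<^sub>R axis j 1) t)"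
  define g where "g = (\<lambda>h. lap u (x + h *\<^sub>R axis j 1) t)"
  have Aeq: "(\<lambda>h. A_u \<mu> \<gamma> u (x + h *\<^sub>R axis j 1) t) = (\<lambda>h. f h + c *\<^sub>R g h)"
    by (simp add: A_u_def f_def g_def c_def)
  have col: "column j (M_u \<mu> \<gamma> u x t) = vector_derivative f (at 0) + c *\<^sub>R vector_derivative g (at 0)"
    by (simp add: column_M pdx_def f_def g_def c_def)
  show ?thesis
  proof (cases "\<exists>d. (f has_vector_derivative d) (at 0)")
    case True
    then obtain d1 where d1: "(f has_vector_derivative d1) (at 0)" by blast
    have "((\<lambda>h. (1/c) *\<^sub>R ((f h + c *\<^sub>R g h) - f h)) has_vector_derivative (1/c) *\<^sub>R (DF - d1)) (at 0)"
      by (intro hvd_scale has_vector_derivative_diff d1 DF(1)[unfolded Aeq])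
    moreover have "(\<lambda>h. (1/c) *\<^sub>R ((f h + c *\<^sub>R g h) - f h)) = g" using c by (auto simp: fun_eq_iff)
    ultimately have d2: "(g has_vector_derivative (1/c) *\<^sub>R (DF - d1)) (at 0)" by simp
    have "((\<lambda>h. f h + c *\<^sub>R g h) has_vector_derivative d1 + c *\<^sub>R ((1/c) *\<^sub>R (DF - d1))) (at 0)"
      by (intro has_vector_derivative_add hvd_scale d1 d2)
    then have "d1 + c *\<^sub>R ((1/c) *\<^sub>R (DF - d1)) = DF"
      using DF(1)[unfolded Aeq] vector_derivative_unique_at by blast
    then have "column j (M_u \<mu> \<gamma> u x t) = DF"
      using col vector_derivative_at[OF d1] vector_derivative_at[OF d2] by simp
    then show ?thesis using DF(2) by simp
  next
    case False
    have "\<not> (\<exists>d. (g has_vector_derivative d) (at 0))"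
    proof
      assume "\<exists>d. (g has_vector_derivative d) (at 0)"
      then obtain d2 where d2: "(g has_vector_derivative d2) (at 0)" by blast
      have "((\<lambda>h. (f h + c *\<^sub>R g h) - c *\<^sub>R g h) has_vector_derivative DF - c *\<^sub>R d2) (at 0)"
        by (intro has_vector_derivative_diff hvd_scale d2 DF(1)[unfolded Aeq])
      then have "(f has_vector_derivative DF - c *\<^sub>R d2) (at 0)" by simp
      with False show False by blast
    qed
    from vd_none[OF this] have "column j (M_u \<mu> \<gamma> u x t) = (1 + c) *\<^sub>R (SOME d::real^'n. False)"
      using col vd_none[OF False] by (simp add: algebra_simps)
    then show ?thesis using c by (simp add: c_def)
  qed
qed



lemma mvt_vd:
  fixes \<phi> :: "real \<Rightarrow> 'a::real_normed_vector"
  assumes "convex S" "\<And>x. x\<in>S \<Longrightarrow> (\<phi> has_vector_derivative \<phi>' x) (at x within S)"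
    "\<And>x. x\<in>S \<Longrightarrow> norm (\<phi>' x) \<le> L" "a\<in>S" "b\<in>S"
  shows "norm (\<phi> b - \<phi> a) \<le> L * \<bar>b - a\<bar>"
proof -
  have "norm (\<phi> b - \<phi> a) \<le> L * norm (b - a)"
  proof (rule differentiable_bound[of S \<phi> "\<lambda>x h. h *\<^sub>R \<phi>' x" L b a])
    show "onorm (\<lambda>h. h *\<^sub>R \<phi>' x) \<le> L" if "x \<in> S" for x
      using assms(3)[OF that] onorm_scaleR_left[OF bounded_linear_ident, of "\<phi>' x"]
      by (simp add: onorm_id)
  qed (use assms in \<open>auto simp: has_vector_derivative_def\<close>)
  then show ?thesis by simp
qed

lemma C1_lip:
  fixes F :: "real^'n \<Rightarrow> real \<Rightarrow> real^'n"
  assumes C1: "C1_bounded D t0 Lb F" and B: "ball x r \<subseteq> D" and x': "x' \<in> ball x r"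
    and t: "t \<ge> t0" and t': "t' \<ge> t0"
  shows "norm (F x' t' - F x t) \<le> Lb * (\<Sum>i\<in>UNIV. \<bar>x'$i - x$i\<bar>) + Lb * \<bar>t' - t\<bar>"
proof -
  obtain DF DFt where H:
    "\<forall>x\<in>D. \<forall>t\<ge>t0.
           (\<forall>i. ((\<lambda>h. F (x + h *\<^sub>R axis i 1) t) has_vector_derivative DF i x t) (at 0))
           \<and> ((\<lambda>s. F x s) has_vector_derivative DFt x t) (at t within {t0..})
           \<and> (\<forall>i. norm (DF i x t) < Lb) \<and> norm (DFt x t) < Lb"
    using C1 unfolding C1_bounded_def by blast
  have DF:
    "\<And>x t i. x\<in>D \<Longrightarrow> t\<ge>t0 \<Longrightarrow> ((\<lambda>h. F (x + h *\<^sub>R axis i 1) t) has_vector_derivative DF i x t) (at 0)"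
    "\<And>x t. x\<in>D \<Longrightarrow> t\<ge>t0 \<Longrightarrow> ((\<lambda>s. F x s) has_vector_derivative DFt x t) (at t within {t0..})"
    "\<And>x t i. x\<in>D \<Longrightarrow> t\<ge>t0 \<Longrightarrow> norm (DF i x t) < Lb"
    "\<And>x t. x\<in>D \<Longrightarrow> t\<ge>t0 \<Longrightarrow> norm (DFt x t) < Lb"
    using H by auto
  have x'D: "x' \<in> D" using B x' by auto
  have time: "norm (F x' t' - F x' t) \<le> Lb * \<bar>t' - t\<bar>"
  proof (rule mvt_vd[of "{min t t'..max t t'}" "\<lambda>s. F x' s" "\<lambda>s. DFt x' s"])
    fix s assume s: "s \<in> {min t t'..max t t'}"
    then have "s \<ge> t0" using t t' by auto
    show "((\<lambda>s. F x' s) has_vector_derivative DFt x' s) (at s within {min t t'..max t t'})"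
      by (rule has_vector_derivative_within_subset[OF DF(2)[OF x'D \<open>s \<ge> t0\<close>]]) (use t t' in auto)
    show "norm (DFt x' s) \<le> Lb" using DF(4)[OF x'D \<open>s \<ge> t0\<close>] by simp
  qed auto
  define p where "p S = (\<chi> i. if i \<in> S then x'$i else x$i)" for S
  have pin: "p S + h *\<^sub>R axis j 1 \<in> D" if "j \<notin> S" "h \<in> closed_segment 0 (x'$j - x$j)" for S j h
  proof -
    have "norm (p S + h *\<^sub>R axis j 1 - x) \<le> norm (x' - x)"
    proof (rule norm_le_componentwise_cart)
      fix i
      show "norm ((p S + h *\<^sub>R axis j 1 - x) $ i) \<le> norm ((x' - x) $ i)"
        using that by (cases "i = j") (auto simp: p_def axis_def closed_segment_eq_real_ivl split: if_splits)
    qed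
    then show ?thesis using x' B by (auto simp: dist_norm norm_minus_commute)
  qed
  have space: "norm (F (p S) t - F x t) \<le> Lb * (\<Sum>i\<in>S. \<bar>x'$i - x$i\<bar>)" for S
  proof (induction S rule: infinite_finite_induct)
    case (infinite S)
    then show ?case by simp
  next
    case empty
    have "p {} = x" by (simp add: p_def vec_eq_iff)
    then show ?case by simp
  next
    case (insert j S)
    define d where "d = x'$j - x$j"
    have peq: "p (insert j S) = p S + d *\<^sub>R axis j 1"
      using insert(2) by (simp add: p_def vec_eq_iff axis_def d_def)
    have "norm (F (p S + d *\<^sub>R axis j 1) t - F (p S + 0 *\<^sub>R axis j 1) t) \<le> Lb * \<bar>d - 0\<bar>"
    proof (rule mvt_vd[of "closed_segment 0 d" "\<lambda>h. F (p S + h *\<^sub>R axis j 1) t" "\<lambda>h. DF j (p S + h *\<^sub>R axis j 1) t"])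
      fix h assume h: "h \<in> closed_segment 0 d"
      have qD: "p S + h *\<^sub>R axis j 1 \<in> D" using pin[OF insert(2)] h by (simp add: d_def)
      have "((\<lambda>k. F ((p S + h *\<^sub>R axis j 1) + k *\<^sub>R axis j 1) t) \<circ> (\<lambda>h'. h' - h) has_vector_derivative
              1 *\<^sub>R DF j (p S + h *\<^sub>R axis j 1) t) (at h)"
        by (rule vector_diff_chain_at) (auto intro!: derivative_eq_intros DF(1)[OF qD t])
      moreover have "((\<lambda>k. F ((p S + h *\<^sub>R axis j 1) + k *\<^sub>R axis j 1) t) \<circ> (\<lambda>h'. h' - h))
          = (\<lambda>h. F (p S + h *\<^sub>R axis j 1) t)"
        by (auto simp: fun_eq_iff algebra_simps)
      ultimately show "((\<lambda>h. F (p S + h *\<^sub>R axis j 1) t) has_vector_derivative DF j (p S + h *\<^sub>R axis j 1) t)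
          (at h within closed_segment 0 d)"
        by (auto intro: has_vector_derivative_at_within)
      show "norm (DF j (p S + h *\<^sub>R axis j 1) t) \<le> Lb" using DF(3)[OF qD t, of j] by simp
    qed auto
    then have "norm (F (p (insert j S)) t - F (p S) t) \<le> Lb * \<bar>x'$j - x$j\<bar>"
      by (simp add: peq d_def)
    then have "norm (F (p (insert j S)) t - F x t) \<le> Lb * \<bar>x'$j - x$j\<bar> + Lb * (\<Sum>i\<in>S. \<bar>x'$i - x$i\<bar>)"
      using insert(3) norm_triangle_ineq[of "F (p (insert j S)) t - F (p S) t" "F (p S) t - F x t"]
      by simp
    then show ?case using insert(1,2) by (simp add: distrib_left)
  qed
  have "p UNIV = x'" by (simp add: p_def vec_eq_iff)
  with space[of UNIV] have "norm (F x' t - F x t) \<le> Lb * (\<Sum>i\<in>UNIV. \<bar>x'$i - x$i\<bar>)" by simp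
  with time show ?thesis
    using norm_triangle_ineq[of "F x' t' - F x' t" "F x' t - F x t"] by simp
qed



lemma l2g:
  fixes \<phi> :: "real \<Rightarrow> 'a::real_normed_vector" and G :: "real \<Rightarrow> real"
  assumes ab: "a \<le> b" and c\<phi>: "continuous_on {a..b} \<phi>" and cG: "continuous_on {a..b} G"
    and loc: "\<And>s. s \<in> {a..<b} \<Longrightarrow> \<exists>\<delta>>0. \<forall>s'\<in>{s..b}. s' - s < \<delta> \<longrightarrow> norm (\<phi> s' - \<phi> s) \<le> G s' - G s"
  shows "norm (\<phi> b - \<phi> a) \<le> G b - G a"
proof -
  define S where "S = {s \<in> {a..b}. norm (\<phi> s - \<phi> a) \<le> G s - G a}"
  have "closed S" unfolding S_def
    by (intro continuous_on_closed_Collect_le continuous_intros c\<phi> cG)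
  have "a \<in> S" using ab by (simp add: S_def)
  have bdd: "bdd_above S" by (auto simp: S_def bdd_above_def)
  define c where "c = Sup S"
  have cS: "c \<in> S" unfolding c_def using \<open>closed S\<close> \<open>a \<in> S\<close> bdd closed_contains_Sup by blast
  have "c = b"
  proof (rule ccontr)
    assume "c \<noteq> b"
    with cS have cab: "c \<in> {a..<b}" by (auto simp: S_def)
    obtain \<delta> where \<delta>: "\<delta> > 0" "\<forall>s'\<in>{c..b}. s' - c < \<delta> \<longrightarrow> norm (\<phi> s' - \<phi> c) \<le> G s' - G c"
      using loc[OF cab] by blast
    define s' where "s' = min b (c + \<delta>/2)"
    have s': "s' \<in> {c..b}" "s' - c < \<delta>" "s' > c" using cab \<delta> by (auto simp: s'_def)
    have "norm (\<phi> s' - \<phi> a) \<le> norm (\<phi> s' - \<phi> c) + norm (\<phi> c - \<phi> a)"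
      by (rule order_trans[OF _ norm_triangle_ineq]) simp
    also have "\<dots> \<le> (G s' - G c) + (G c - G a)"
      using \<delta>(2) s' cS by (intro add_mono) (auto simp: S_def)
    finally have "s' \<in> S" using s' cab by (auto simp: S_def)
    then have "s' \<le> c" unfolding c_def using bdd by (rule cSup_upper)
    with s' show False by simp
  qed
  with cS show ?thesis by (simp add: S_def)
qed




lemma sum_abs_le_card_norm:
  fixes v :: "real^'n"
  shows "(\<Sum>i\<in>UNIV. \<bar>v$i\<bar>) \<le> real CARD('n) * norm v"
proof -
  have "(\<Sum>i\<in>UNIV. \<bar>v$i\<bar>) \<le> (\<Sum>i\<in>(UNIV::'n set). norm v)"
    by (intro sum_mono component_le_norm_cart)
  then show ?thesis by simp
qed

lemma C1_lip2:
  fixes F :: "real^'n \<Rightarrow> real \<Rightarrow> real^'n"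
  assumes C1: "C1_bounded D t0 Lb F" and B: "ball x r \<subseteq> D" and x': "x' \<in> ball x r"
    and t: "t \<ge> t0" and t': "t' \<ge> t0" and Lb: "Lb \<ge> 0"
  shows "norm (F x' t' - F x t) \<le> Lb * real CARD('n) * norm (x' - x) + Lb * \<bar>t' - t\<bar>"
proof -
  have "Lb * (\<Sum>i\<in>UNIV. \<bar>x'$i - x$i\<bar>) \<le> Lb * (real CARD('n) * norm (x' - x))"
    using sum_abs_le_card_norm[of "x' - x"] Lb by (intro mult_left_mono) auto
  then show ?thesis using C1_lip[OF assms(1-5)] by (simp add: mult.assoc)
qed

lemma comp_cont:
  fixes F :: "real^'n \<Rightarrow> real \<Rightarrow> real^'n" and y :: "real \<Rightarrow> real^'n"
  assumes C1: "C1_bounded D t0 Lb F" and D: "open D" and Lb: "Lb \<ge> 0"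
    and yc: "continuous_on {t0..<T} y" and yD: "y ` {t0..<T} \<subseteq> D"
  shows "continuous_on {t0..<T} (\<lambda>s. F (y s) s)"
  unfolding continuous_on_iff
proof (intro ballI allI impI)
  fix s e :: real assume s: "s \<in> {t0..<T}" and e: "e > 0"
  obtain r where r: "r > 0" "ball (y s) r \<subseteq> D" using D yD s open_contains_ball by blast
  define K where "K = Lb * real CARD('n) + Lb + 1"
  have K: "K > 0" using Lb unfolding K_def by (smt (verit) mult_nonneg_nonneg of_nat_0_le_iff)
  define e' where "e' = min r (e / (2*K))"
  have e': "e' > 0" using r e K by (simp add: e'_def)
  obtain d1 where d1: "d1 > 0" "\<forall>s'\<in>{t0..<T}. dist s' s < d1 \<longrightarrow> dist (y s') (y s) < e'"
    using yc s e' unfolding continuous_on_iff by blast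
  show "\<exists>d>0. \<forall>s'\<in>{t0..<T}. dist s' s < d \<longrightarrow> dist (F (y s') s') (F (y s) s) < e"
  proof (intro exI[of _ "min d1 (e / (2*K))"] conjI ballI impI)
    show "min d1 (e / (2*K)) > 0" using d1 e K by simp
    fix s' assume s': "s' \<in> {t0..<T}" "dist s' s < min d1 (e / (2*K))"
    have yy: "dist (y s') (y s) < e'" using d1 s' by auto
    then have inb: "y s' \<in> ball (y s) r" by (simp add: e'_def dist_commute)
    have "norm (F (y s') s' - F (y s) s) \<le> Lb * real CARD('n) * norm (y s' - y s) + Lb * \<bar>s' - s\<bar>"
      by (rule C1_lip2[OF C1 r(2) inb]) (use s s' Lb in auto)
    also have "\<dots> \<le> K * norm (y s' - y s) + K * \<bar>s' - s\<bar>"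
      using Lb by (intro add_mono mult_right_mono) (auto simp: K_def)
    also have "\<dots> < K * (e / (2*K)) + K * (e / (2*K))"
      using yy s'(2) K by (intro add_strict_mono mult_strict_left_mono) (auto simp: dist_norm e'_def)
    also have "\<dots> = e" using K by (simp add: field_simps)
    finally show "dist (F (y s') s') (F (y s) s) < e" by (simp add: dist_norm)
  qed
qed

lemma path_bound:
  fixes F :: "real^'n \<Rightarrow> real \<Rightarrow> real^'n" and y v :: "real \<Rightarrow> real^'n"
  assumes C1: "C1_bounded D t0 Lb F" and D: "open D" and Lb: "Lb \<ge> 0"
    and yc: "continuous_on {t0..<T} y" and yD: "y ` {t0..<T} \<subseteq> D"
    and vc: "continuous_on {t0..<T} v"
    and yeq: "\<forall>t\<in>{t0..<T}. (v has_integral (y t - y0)) {t0..t}"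
    and t: "t \<in> {t0..<T}"
  shows "norm (F (y t) t - F (y t0) t0) \<le> Lb * real CARD('n) * integral {t0..t} (\<lambda>s. norm (v s)) + Lb * (t - t0)"
proof -
  have sub: "{t0..t} \<subseteq> {t0..<T}" using t by auto
  have vint: "v integrable_on {a..b}" if "{a..b} \<subseteq> {t0..<T}" for a b
    by (rule integrable_continuous_interval) (rule continuous_on_subset[OF vc that])
  have nvint: "(\<lambda>s. norm (v s)) integrable_on {a..b}" if "{a..b} \<subseteq> {t0..<T}" for a b
    by (rule integrable_continuous_interval) (intro continuous_intros continuous_on_subset[OF vc that])
  define G where "G s = Lb * real CARD('n) * integral {t0..s} (\<lambda>s. norm (v s)) + Lb * s" for s
  have "norm ((\<lambda>s. F (y s) s) t - (\<lambda>s. F (y s) s) t0) \<le> G t - G t0"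
  proof (rule l2g)
    show "t0 \<le> t" using t by simp
    show "continuous_on {t0..t} (\<lambda>s. F (y s) s)"
      by (rule continuous_on_subset[OF comp_cont[OF C1 D Lb yc yD] sub])
    show "continuous_on {t0..t} G" unfolding G_def
      by (intro continuous_intros indefinite_integral_continuous_1 nvint sub)
    fix s assume s: "s \<in> {t0..<t}"
    then have sT: "s \<in> {t0..<T}" using t by auto
    obtain r where r: "r > 0" "ball (y s) r \<subseteq> D" using D yD sT open_contains_ball by blast
    obtain d1 where d1: "d1 > 0" "\<forall>s'\<in>{t0..<T}. dist s' s < d1 \<longrightarrow> dist (y s') (y s) < r"
      using continuous_on_iff[THEN iffD1, OF yc, rule_format, OF sT r(1)] by blast
    show "\<exists>\<delta>>0. \<forall>s'\<in>{s..t}. s' - s < \<delta> \<longrightarrow> norm (F (y s') s' - F (y s) s) \<le> G s' - G s"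
    proof (intro exI[of _ d1] conjI ballI impI)
      show "d1 > 0" by (rule d1(1))
    next
      fix s' assume s': "s' \<in> {s..t}" "s' - s < d1"
      have s'T: "s' \<in> {t0..<T}" using s' s t by auto
      have inb: "y s' \<in> ball (y s) r" using d1(2) s'T s' by (auto simp: dist_real_def dist_commute)
      have i1: "(v has_integral (y s - y0)) {t0..s}" and i2: "(v has_integral (y s' - y0)) {t0..s'}"
        using yeq sT s'T by auto
      have "(v has_integral (y s' - y0) - (y s - y0)) {s..s'}"
      proof -
        have "(v has_integral integral {s..s'} v) {s..s'}"
          using s'T s by (intro integrable_integral vint) auto
        moreover have comb: "integral {t0..s} v + integral {s..s'} v = integral {t0..s'} v"
          using s s' s'T by (intro Henstock_Kurzweil_Integration.integral_combine vint) auto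
        moreover have "integral {t0..s} v = y s - y0" using i1 by (rule integral_unique)
        moreover have "integral {t0..s'} v = y s' - y0" using i2 by (rule integral_unique)
        ultimately show ?thesis by (metis add_diff_cancel_left')
      qed
      then have yd: "y s' - y s = integral {s..s'} v" by (simp add: integral_unique)
      have n1: "norm (y s' - y s) \<le> integral {s..s'} (\<lambda>s. norm (v s))"
        unfolding yd using s s'T by (intro integral_norm_bound_integral vint nvint) auto
      have n2: "integral {t0..s} (\<lambda>s. norm (v s)) + integral {s..s'} (\<lambda>s. norm (v s)) = integral {t0..s'} (\<lambda>s. norm (v s))"
        using s s' s'T by (intro Henstock_Kurzweil_Integration.integral_combine nvint) auto
      have n3: "norm (F (y s') s' - F (y s) s) \<le> Lb * real CARD('n) * norm (y s' - y s) + Lb * \<bar>s' - s\<bar>"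
        by (rule C1_lip2[OF C1 r(2) inb]) (use s s' Lb in auto)
      have n4: "Lb * real CARD('n) * norm (y s' - y s) \<le> Lb * real CARD('n) * integral {s..s'} (\<lambda>s. norm (v s))"
        using n1 Lb by (intro mult_left_mono) auto
      have n5: "G s' - G s = Lb * real CARD('n) * integral {s..s'} (\<lambda>s. norm (v s)) + Lb * (s' - s)"
        unfolding G_def n2[symmetric] by (simp add: algebra_simps)
      show "norm (F (y s') s' - F (y s) s) \<le> G s' - G s"
        unfolding n5 using n3 n4 s' by simp
    qed
  qed
  then show ?thesis by (simp add: G_def algebra_simps)
qed




lemma sq_int:
  fixes a b e :: real
  assumes "a \<le> b" "b \<le> e"
  shows "((\<lambda>s. 1 / sqrt (e - s)) has_integral (2 * sqrt (e - a) - 2 * sqrt (e - b))) {a..b}"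
proof -
  have "((\<lambda>s. 1 / sqrt (e - s)) has_integral ((\<lambda>s. - 2 * sqrt (e - s)) b - (\<lambda>s. - 2 * sqrt (e - s)) a)) {a..b}"
  proof (rule fundamental_theorem_of_calculus_interior)
    show "a \<le> b" by fact
    show "continuous_on {a..b} (\<lambda>s. - 2 * sqrt (e - s))" by (intro continuous_intros)
    fix x assume x: "x \<in> {a<..<b}"
    then have ex: "e - x > 0" using assms by auto
    have "((\<lambda>s. sqrt (e - s)) has_real_derivative (inverse (sqrt (e - x)) / 2 * (0 - 1))) (at x)"
      by (rule DERIV_chain2[of sqrt _ "\<lambda>s. e - s", OF DERIV_real_sqrt[OF ex]]) (auto intro!: derivative_eq_intros)
    then have "((\<lambda>s. - 2 * sqrt (e - s)) has_real_derivative (- 2 * (inverse (sqrt (e - x)) / 2 * (0 - 1)))) (at x)"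
      by (rule DERIV_cmult)
    moreover have "- 2 * (inverse (sqrt (e - x)) / 2 * (0 - 1)) = 1 / sqrt (e - x)"
      by (simp add: field_simps)
    ultimately show "((\<lambda>s. - 2 * sqrt (e - s)) has_vector_derivative 1 / sqrt (e - x)) (at x)"
      by (simp add: has_real_derivative_iff_has_vector_derivative)
  qed
  then show ?thesis by simp
qed

lemma q_int:
  fixes a b e \<alpha> k :: real
  assumes "a \<le> b" "b \<le> e"
  shows "((\<lambda>s. \<alpha> + k / sqrt (e - s)) has_integral (\<alpha> * (b - a) + k * (2 * sqrt (e - a) - 2 * sqrt (e - b)))) {a..b}"
proof -
  have c: "((\<lambda>s. \<alpha>) has_integral \<alpha> * (b - a)) {a..b}"
    using has_integral_const_real[of \<alpha> a b] assms by (simp add: mult.commute)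
  have "((\<lambda>s. \<alpha> + k * (1 / sqrt (e - s))) has_integral (\<alpha> * (b - a) + k * (2 * sqrt (e - a) - 2 * sqrt (e - b)))) {a..b}"
    by (intro has_integral_add has_integral_mult_right sq_int assms c)
  then show ?thesis by simp
qed

lemma split_bound:
  fixes f :: "real \<Rightarrow> 'a::euclidean_space" and z :: "real \<Rightarrow> real"
  assumes fi: "f integrable_on {t0..t}" and \<tau>: "t0 \<le> \<tau>" "\<tau> \<le> t"
    and \<alpha>: "\<alpha> \<ge> 0" and k: "k \<ge> 0" and m: "m1 \<ge> 0" "m2 \<ge> 0"
    and fb: "\<And>s. s \<in> {t0..t} \<Longrightarrow> norm (f s) \<le> (\<alpha> + k / sqrt (t - s)) * z s"
    and z1: "\<And>s. s \<in> {t0..\<tau>} \<Longrightarrow> z s \<le> m1"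
    and z2: "\<And>s. s \<in> {t0..t} \<Longrightarrow> z s \<le> m2"
  shows "norm (integral {t0..t} f) \<le> m1 * (\<alpha> * (t - t0) + 2 * k * sqrt (t - t0)) + m2 * (\<alpha> * (t - \<tau>) + 2 * k * sqrt (t - \<tau>))"
proof -
  define q where "q s = \<alpha> + k / sqrt (t - s)" for s
  have q0: "q s \<ge> 0" if "s \<le> t" for s using \<alpha> k that by (simp add: q_def)
  have i1: "((\<lambda>s. m1 * q s) has_integral m1 * (\<alpha> * (t - t0) + k * (2 * sqrt (t - t0) - 2 * sqrt (t - t)))) {t0..t}"
    unfolding q_def by (intro has_integral_mult_right q_int) (use \<tau> in auto)
  have i2': "((\<lambda>s. m2 * q s) has_integral m2 * (\<alpha> * (t - \<tau>) + k * (2 * sqrt (t - \<tau>) - 2 * sqrt (t - t)))) {\<tau>..t}"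
    unfolding q_def by (intro has_integral_mult_right q_int) (use \<tau> in auto)
  have i2: "((\<lambda>s. if s \<in> {\<tau>..t} then m2 * q s else 0) has_integral m2 * (\<alpha> * (t - \<tau>) + k * (2 * sqrt (t - \<tau>) - 2 * sqrt (t - t)))) {t0..t}"
    using has_integral_restrict_closed_subinterval[of "\<lambda>s. m2 * q s" _ \<tau> t t0 t] i2' \<tau> by auto
  have gi: "((\<lambda>s. m1 * q s + (if s \<in> {\<tau>..t} then m2 * q s else 0)) has_integral
      m1 * (\<alpha> * (t - t0) + 2 * k * sqrt (t - t0)) + m2 * (\<alpha> * (t - \<tau>) + 2 * k * sqrt (t - \<tau>))) {t0..t}"
    using has_integral_add[OF i1 i2] by (simp add: algebra_simps)
  have "norm (integral {t0..t} f) \<le> integral {t0..t} (\<lambda>s. m1 * q s + (if s \<in> {\<tau>..t} then m2 * q s else 0))"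
  proof (rule integral_norm_bound_integral[OF fi])
    show "(\<lambda>s. m1 * q s + (if s \<in> {\<tau>..t} then m2 * q s else 0)) integrable_on {t0..t}"
      using gi by blast
    fix s assume s: "s \<in> {t0..t}"
    have "norm (f s) \<le> q s * z s" using fb[OF s] by (simp add: q_def)
    also have "\<dots> \<le> m1 * q s + (if s \<in> {\<tau>..t} then m2 * q s else 0)"
    proof (cases "s \<le> \<tau>")
      case True
      then have "q s * z s \<le> q s * m1" using z1 s q0[of s] by (intro mult_left_mono) auto
      moreover have "0 \<le> (if s \<in> {\<tau>..t} then m2 * q s else 0)" using m q0[of s] s by auto
      ultimately show ?thesis by (simp add: mult.commute)
    next
      case False
      then have "q s * z s \<le> q s * (m1 + m2)" using z2[OF s] s q0[of s] m by (intro mult_left_mono) auto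
      then show ?thesis using False s by (simp add: algebra_simps)
    qed
    finally show "norm (f s) \<le> m1 * q s + (if s \<in> {\<tau>..t} then m2 * q s else 0)" .
  qed
  also have "\<dots> = m1 * (\<alpha> * (t - t0) + 2 * k * sqrt (t - t0)) + m2 * (\<alpha> * (t - \<tau>) + 2 * k * sqrt (t - \<tau>))"
    using gi by (rule integral_unique)
  finally show ?thesis .
qed




lemma gron:
  fixes z :: "real \<Rightarrow> real"
  assumes zc: "continuous_on {t0..<T} z" and z0: "\<And>s. s \<in> {t0..<T} \<Longrightarrow> z s \<ge> 0" and a: "a \<ge> 0" and b: "b \<ge> 0" and P: "P \<ge> 0"
    and H: "\<And>t \<tau> m1 m2. t \<in> {t0..<T} \<Longrightarrow> \<tau> \<in> {t0..t} \<Longrightarrow> 0 \<le> m1 \<Longrightarrow> 0 \<le> m2 \<Longrightarrow>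
       (\<forall>s\<in>{t0..\<tau>}. z s \<le> m1) \<Longrightarrow> (\<forall>s\<in>{t0..t}. z s \<le> m2) \<Longrightarrow>
       z t \<le> C0 + P * m1 + (a * (t - \<tau>) + b * sqrt (t - \<tau>)) * m2"
  shows "\<exists>Z. \<forall>s\<in>{t0..<T}. z s \<le> Z"
proof -
  define h where "h = (1 / (2 * (a + b + 1)))^2"
  have h0: "h > 0" using a b by (simp add: h_def)
  have sh: "sqrt h = 1 / (2 * (a + b + 1))" using a b by (simp add: h_def)
  have h1: "h \<le> 1" using a b unfolding h_def by (simp add: power_le_one)
  have small: "a * d + b * sqrt d \<le> 1/2" if "0 \<le> d" "d \<le> h" for d
  proof -
    have "sqrt d \<le> sqrt h" using that by simp
    moreover have "d \<le> sqrt d"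
    proof -
      have s1: "sqrt d \<le> 1" using that h1 by simp
      have "d = sqrt d * sqrt d" using that by simp
      also have "\<dots> \<le> sqrt d * 1" using s1 that by (intro mult_left_mono) auto
      finally show ?thesis by simp
    qed
    ultimately have "a * d + b * sqrt d \<le> (a + b) * sqrt h"
      using a b \<open>d \<le> h\<close> by (smt (verit) mult_left_mono distrib_right)
    also have "\<dots> \<le> 1/2" using a b by (simp add: sh field_simps)
    finally show ?thesis .
  qed
  have step: "\<exists>M\<ge>0. \<forall>s\<in>{t0..<T}. s \<le> t0 + real k * h \<longrightarrow> z s \<le> M" for k
  proof (induction k)
    case 0
    show ?case by (intro exI[of _ "\<bar>z t0\<bar>"]) auto
  next
    case (Suc k)
    then obtain M where M: "M \<ge> 0" "\<forall>s\<in>{t0..<T}. s \<le> t0 + real k * h \<longrightarrow> z s \<le> M" by blast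
    define M' where "M' = max M (2 * \<bar>C0\<bar> + 2 * (P * M))"
    show ?case
    proof (intro exI[of _ M'] conjI ballI impI)
      show "M' \<ge> 0" using M by (simp add: M'_def le_max_iff_disj)
      fix t assume t: "t \<in> {t0..<T}" "t \<le> t0 + real (Suc k) * h"
      have "continuous_on {t0..t} z" using t by (intro continuous_on_subset[OF zc]) auto
      then obtain s where s: "s \<in> {t0..t}" "\<forall>r\<in>{t0..t}. z r \<le> z s"
        using continuous_attains_sup[of "{t0..t}" z] t by auto
      have "z t \<le> z s" using s t by auto
      moreover have "z s \<le> M'"
      proof (cases "s \<le> t0 + real k * h")
        case True
        then show ?thesis using M s t by (auto simp: M'_def)
      next
        case False
        define \<tau> where "\<tau> = t0 + real k * h"
        have sT: "s \<in> {t0..<T}" using s t by auto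
        have \<tau>: "\<tau> \<in> {t0..s}" using False h0 by (auto simp: \<tau>_def)
        have "z s \<le> C0 + P * M + (a * (s - \<tau>) + b * sqrt (s - \<tau>)) * z s"
        proof (rule H[OF sT \<tau> M(1)])
          show "0 \<le> z s" using z0[OF sT] .
          show "\<forall>r\<in>{t0..\<tau>}. z r \<le> M" using M(2) \<tau> sT by (auto simp: \<tau>_def)
          show "\<forall>r\<in>{t0..s}. z r \<le> z s" using s by auto
        qed
        moreover have "s - \<tau> \<le> h" using s t by (auto simp: \<tau>_def algebra_simps)
        then have "a * (s - \<tau>) + b * sqrt (s - \<tau>) \<le> 1/2" using small \<tau> by auto
        moreover have "0 \<le> z s" using z0[OF sT] .
        ultimately have "z s \<le> C0 + P * M + (1/2) * z s"
          by (smt (verit) mult_right_mono)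
        then have "z s \<le> 2 * \<bar>C0\<bar> + 2 * (P * M)" using abs_ge_self[of C0] by linarith
        then show ?thesis unfolding M'_def by (simp add: le_max_iff_disj)
      qed
      ultimately show "z t \<le> M'" by simp
    qed
  qed
  obtain k :: nat where k: "(T - t0) / h \<le> real k" using real_arch_simple by blast
  then have "T \<le> t0 + real k * h" using h0 by (simp add: field_simps)
  with step[of k] show ?thesis by force
qed




lemma memint:
  fixes w :: "real \<Rightarrow> 'a::euclidean_space"
  assumes wc: "continuous_on {a..e} w" and ae: "a \<le> e"
  shows "(\<lambda>s. (1 / sqrt (e - s)) *\<^sub>R w s) integrable_on {a..e}"
proof -
  have bil: "bilinear (\<lambda>(v::'a) (r::real). r *\<^sub>R v)"
    unfolding bilinear_conv_bounded_bilinear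
    by (rule bounded_bilinear.flip[OF bounded_bilinear_scaleR])
  have gi: "(\<lambda>s. 1 / sqrt (e - s)) integrable_on {a..e}"
    using sq_int[OF ae order_refl] by blast
  have ga: "(\<lambda>s. 1 / sqrt (e - s)) absolutely_integrable_on {a..e}"
    by (rule nonnegative_absolutely_integrable_1[OF gi]) auto
  have wm: "w \<in> borel_measurable (lebesgue_on {a..e})"
    by (rule continuous_imp_measurable_on_sets_lebesgue[OF wc]) auto
  have wb: "bounded (w ` {a..e})"
    by (intro compact_imp_bounded compact_continuous_image wc) auto
  have "(\<lambda>s. (1 / sqrt (e - s)) *\<^sub>R w s) absolutely_integrable_on {a..e}"
    using absolutely_integrable_bounded_measurable_product[OF bil wm _ wb ga] by simp
  then show ?thesis using set_lebesgue_integral_eq_integral(1) by blast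
qed



theorem lemma4p1:
  fixes D :: "(real^'n) set"
    and u :: "real^'n \<Rightarrow> real \<Rightarrow> real^'n"
    and g y0 w0 :: "real^'n"
    and R \<mu> \<kappa> \<gamma> t0 T Lb :: real
    and y w :: "real \<Rightarrow> real^'n"
  assumes D_domain: "open D" "connected D"
    and t0: "t0 \<ge> 0"
    and params: "R > 0" "\<mu> > 0" "\<kappa> > 0" "\<gamma> > 0"
    and starA: "C1_bounded D t0 Lb (A_u \<mu> \<gamma> u)"
    and starB: "C1_bounded D t0 Lb (B_u R \<mu> \<gamma> g u)"
    and T: "t0 < T"
    and y_cont: "continuous_on {t0..<T} y"
    and w_cont: "continuous_on {t0..<T} w"
    and y_in_D: "y ` {t0..<T} \<subseteq> D"
    and y_eq: "\<forall>t\<in>{t0..<T}.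
         ((\<lambda>s. w s + A_u \<mu> \<gamma> u (y s) s) has_integral (y t - y0)) {t0..t}"
    and w_eq: "\<forall>t\<in>{t0..<T}.
         ((\<lambda>s. - (\<mu> *\<^sub>R w s) - (M_u \<mu> \<gamma> u (y s) s *v w s)
                - ((\<kappa> * sqrt \<mu>) / sqrt (t - s)) *\<^sub>R w s
                + B_u R \<mu> \<gamma> g u (y s) s) has_integral (w t - w0)) {t0..t}"
  shows "(\<exists>C>0. \<forall>t1 t2. t0 < t1 \<and> t1 < t2 \<and> t2 < T \<longrightarrow>
            norm (integral {t0..t2} (\<lambda>s. (1 / sqrt (t2 - s)) *\<^sub>R w s)
                  - integral {t0..t1} (\<lambda>s. (1 / sqrt (t1 - s)) *\<^sub>R w s))
              \<le> C * sqrt \<bar>t2 - t1\<bar>)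
         \<and> (w t0 = 0 \<longrightarrow> ((\<lambda>t. (1 / sqrt (t - t0)) *\<^sub>R w t) \<longlongrightarrow> 0) (at_right t0))"
proof -
  define c where "c = \<gamma> / 6 / \<mu>"
  define k where "k = \<kappa> * sqrt \<mu>"
  define N where "N = real CARD('n)"
  define Kc where "Kc = max Lb ((1 + \<gamma>/6/\<mu>) * norm (SOME d::real^'n. False))"
  define K where "K = N * Kc"
  define \<phi>A where "\<phi>A s = A_u \<mu> \<gamma> u (y s) s" for s
  define \<phi>B where "\<phi>B s = B_u R \<mu> \<gamma> g u (y s) s" for s
  define v where "v s = w s + \<phi>A s" for s
  define f where "f t s = - (\<mu> *\<^sub>R w s) - (M_u \<mu> \<gamma> u (y s) s *v w s)
                - ((\<kappa> * sqrt \<mu>) / sqrt (t - s)) *\<^sub>R w s + \<phi>B s" for t s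
  define z where "z s = norm (w s) + norm (\<phi>A s) + norm (\<phi>B s)" for s
  have k0: "k > 0" using params by (simp add: k_def)
  have N0: "N \<ge> 0" by (simp add: N_def)
  have t0T: "t0 \<in> {t0..<T}" using T by simp
  have yt0D: "y t0 \<in> D" using y_in_D t0T by auto
  have Lb0: "Lb \<ge> 0"
  proof -
    obtain DF DFt where H:
      "\<forall>x\<in>D. \<forall>t\<ge>t0.
           (\<forall>i. ((\<lambda>h. A_u \<mu> \<gamma> u (x + h *\<^sub>R axis i 1) t) has_vector_derivative DF i x t) (at 0))
           \<and> ((\<lambda>s. A_u \<mu> \<gamma> u x s) has_vector_derivative DFt x t) (at t within {t0..})
           \<and> (\<forall>i. norm (DF i x t) < Lb) \<and> norm (DFt x t) < Lb"
      using starA unfolding C1_bounded_def by blast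
    then have "norm (DFt (y t0) t0) < Lb" using yt0D by auto
    then show ?thesis by (meson norm_ge_zero order_trans less_imp_le)
  qed
  have Kc0: "Kc \<ge> 0" using Lb0 by (simp add: Kc_def le_max_iff_disj)
  have K0: "K \<ge> 0" using Kc0 N0 by (simp add: K_def)
  have Mb: "norm (M_u \<mu> \<gamma> u (y s) s *v x) \<le> K * norm x" if s: "s \<in> {t0..<T}" for s x
  proof -
    have ysD: "y s \<in> D" using y_in_D s by auto
    have col: "norm (column j (M_u \<mu> \<gamma> u (y s) s)) \<le> Kc" for j
      unfolding Kc_def by (rule M_col_bound[OF starA ysD _ params(2,4)]) (use s in auto)
    have "norm (M_u \<mu> \<gamma> u (y s) s *v x) = norm (\<Sum>i\<in>UNIV. x$i *\<^sub>R column i (M_u \<mu> \<gamma> u (y s) s))"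
      by (simp add: matrix_mult_sum scalar_mult_eq_scaleR)
    also have "\<dots> \<le> (\<Sum>i\<in>UNIV. norm (x$i *\<^sub>R column i (M_u \<mu> \<gamma> u (y s) s)))"
      by (rule norm_sum)
    also have "\<dots> \<le> (\<Sum>i\<in>(UNIV::'n set). norm x * Kc)"
    proof (rule sum_mono)
      fix i
      have "norm (x$i *\<^sub>R column i (M_u \<mu> \<gamma> u (y s) s)) = \<bar>x$i\<bar> * norm (column i (M_u \<mu> \<gamma> u (y s) s))"
        by simp
      also have "\<dots> \<le> norm x * Kc"
        using component_le_norm_cart[of x i] col[of i] Kc0 by (intro mult_mono) auto
      finally show "norm (x$i *\<^sub>R column i (M_u \<mu> \<gamma> u (y s) s)) \<le> norm x * Kc" .
    qed
    also have "\<dots> = K * norm x" by (simp add: K_def N_def)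
    finally show ?thesis .
  qed
  have cA: "continuous_on {t0..<T} \<phi>A"
    unfolding \<phi>A_def by (rule comp_cont[OF starA D_domain(1) Lb0 y_cont y_in_D])
  have cB: "continuous_on {t0..<T} \<phi>B"
    unfolding \<phi>B_def by (rule comp_cont[OF starB D_domain(1) Lb0 y_cont y_in_D])
  have cv: "continuous_on {t0..<T} v"
    unfolding v_def by (intro continuous_intros w_cont cA)
  have cz: "continuous_on {t0..<T} z"
    unfolding z_def by (intro continuous_intros w_cont cA cB)
  have yeq': "\<forall>t\<in>{t0..<T}. (v has_integral (y t - y0)) {t0..t}"
  proof -
    have "v = (\<lambda>s. w s + A_u \<mu> \<gamma> u (y s) s)" by (simp add: fun_eq_iff v_def \<phi>A_def)
    then show ?thesis using y_eq by simp
  qed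
  have bA: "norm (\<phi>A t) \<le> norm (\<phi>A t0) + Lb * N * integral {t0..t} (\<lambda>s. norm (v s)) + Lb * (t - t0)"
    if t: "t \<in> {t0..<T}" for t
    using path_bound[OF starA D_domain(1) Lb0 y_cont y_in_D cv yeq' t]
      norm_triangle_ineq2[of "\<phi>A t" "\<phi>A t0"] unfolding \<phi>A_def N_def by linarith
  have bB: "norm (\<phi>B t) \<le> norm (\<phi>B t0) + Lb * N * integral {t0..t} (\<lambda>s. norm (v s)) + Lb * (t - t0)"
    if t: "t \<in> {t0..<T}" for t
    using path_bound[OF starB D_domain(1) Lb0 y_cont y_in_D cv yeq' t]
      norm_triangle_ineq2[of "\<phi>B t" "\<phi>B t0"] unfolding \<phi>B_def N_def by linarith
  have fint: "(f t has_integral (w t - w0)) {t0..t}" if "t \<in> {t0..<T}" for t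
  proof -
    have "f t = (\<lambda>s. - (\<mu> *\<^sub>R w s) - (M_u \<mu> \<gamma> u (y s) s *v w s)
                - ((\<kappa> * sqrt \<mu>) / sqrt (t - s)) *\<^sub>R w s + B_u R \<mu> \<gamma> g u (y s) s)"
      by (simp add: fun_eq_iff f_def \<phi>B_def)
    then show ?thesis using w_eq that by simp
  qed
  have fb0: "norm (f t s) \<le> (\<mu> + K) * norm (w s) + (k / sqrt (t - s)) * norm (w s) + norm (\<phi>B s)"
    if t: "t \<in> {t0..<T}" and s: "s \<in> {t0..t}" for t s
  proof -
    have sT: "s \<in> {t0..<T}" using s t by auto
    have sq: "sqrt (t - s) \<ge> 0" using s by auto
    have "norm (f t s) \<le> norm (\<mu> *\<^sub>R w s) + norm (M_u \<mu> \<gamma> u (y s) s *v w s)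
          + norm (((\<kappa> * sqrt \<mu>) / sqrt (t - s)) *\<^sub>R w s) + norm (\<phi>B s)"
      unfolding f_def by (intro norm_triangle_le order_trans[OF norm_triangle_ineq4] add_mono order_refl
           order_trans[OF norm_diff_ineq] ) (simp add: norm_minus_commute)
    also have "\<dots> \<le> \<mu> * norm (w s) + K * norm (w s) + (k / sqrt (t - s)) * norm (w s) + norm (\<phi>B s)"
      using Mb[OF sT, of "w s"] params k0 sq by (simp add: k_def abs_mult)
    finally show ?thesis by (simp add: algebra_simps)
  qed
  have fb: "norm (f t s) \<le> ((\<mu> + K + 1) + k / sqrt (t - s)) * z s" if t: "t \<in> {t0..<T}" and s: "s \<in> {t0..t}" for t s
  proof -
    have sq: "sqrt (t - s) \<ge> 0" using s by auto
    have "(\<mu> + K) * norm (w s) + (k / sqrt (t - s)) * norm (w s) + norm (\<phi>B s) \<le> ((\<mu> + K + 1) + k / sqrt (t - s)) * z s"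
      using params K0 k0 sq unfolding z_def by (simp add: algebra_simps)
    then show ?thesis using fb0[OF t s] by linarith
  qed
  define \<alpha> where "\<alpha> = \<mu> + K + 1"
  define C0 where "C0 = norm w0 + norm (\<phi>A t0) + norm (\<phi>B t0) + 2 * (Lb * (T - t0))"
  define P where "P = \<alpha> * (T - t0) + 2 * k * sqrt (T - t0) + 2 * (Lb * N * (T - t0))"
  define a where "a = \<alpha> + 2 * (Lb * N)"
  define b where "b = 2 * k"
  have \<alpha>0: "\<alpha> \<ge> 0" using params K0 by (simp add: \<alpha>_def)
  have LN: "Lb * N \<ge> 0" using Lb0 N0 by simp
  have H: "z t \<le> C0 + P * m1 + (a * (t - \<tau>) + b * sqrt (t - \<tau>)) * m2"
    if t: "t \<in> {t0..<T}" and \<tau>: "\<tau> \<in> {t0..t}" and m: "0 \<le> m1" "0 \<le> m2"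
      and z1: "\<forall>s\<in>{t0..\<tau>}. z s \<le> m1" and z2: "\<forall>s\<in>{t0..t}. z s \<le> m2" for t \<tau> m1 m2
  proof -
    have wt: "w t = w0 + integral {t0..t} (f t)" using integral_unique[OF fint[OF t]] by simp
    have fi: "f t integrable_on {t0..t}" using fint[OF t] by blast
    have w1: "norm (integral {t0..t} (f t)) \<le> m1 * (\<alpha> * (t - t0) + 2 * k * sqrt (t - t0)) + m2 * (\<alpha> * (t - \<tau>) + 2 * k * sqrt (t - \<tau>))"
      by (rule split_bound[OF fi _ _ \<alpha>0 _ m, of \<tau> k z]) (use \<tau> k0 z1 z2 fb[OF t] in \<open>auto simp: \<alpha>_def\<close>)
    have vi: "(\<lambda>s. norm (v s)) integrable_on {t0..t}"
      using t by (intro integrable_continuous_interval continuous_intros continuous_on_subset[OF cv]) auto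
    have X0: "norm (integral {t0..t} (\<lambda>s. norm (v s))) \<le> m1 * (1 * (t - t0) + 2 * 0 * sqrt (t - t0)) + m2 * (1 * (t - \<tau>) + 2 * 0 * sqrt (t - \<tau>))"
    proof (rule split_bound[OF vi _ _ _ _ m, of \<tau> 1 0 z])
      fix s assume "s \<in> {t0..t}"
      have "norm (v s) \<le> norm (w s) + norm (\<phi>A s)" unfolding v_def by (rule norm_triangle_ineq)
      then have "norm (v s) \<le> z s" unfolding z_def using norm_ge_zero[of "\<phi>B s"] by linarith
      then show "norm (norm (v s)) \<le> (1 + 0 / sqrt (t - s)) * z s" by simp
    qed (use \<tau> z1 z2 in auto)
    have X: "integral {t0..t} (\<lambda>s. norm (v s)) \<le> m1 * (t - t0) + m2 * (t - \<tau>)"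
      using X0 abs_ge_self[of "integral {t0..t} (\<lambda>s. norm (v s))"] by simp
    have LX: "Lb * N * integral {t0..t} (\<lambda>s. norm (v s)) \<le> m1 * (Lb * N * (T - t0)) + m2 * (Lb * N * (t - \<tau>))"
    proof -
      have "Lb * N * integral {t0..t} (\<lambda>s. norm (v s)) \<le> Lb * N * (m1 * (t - t0) + m2 * (t - \<tau>))"
        by (rule mult_left_mono[OF X LN])
      also have "\<dots> = m1 * (Lb * N * (t - t0)) + m2 * (Lb * N * (t - \<tau>))" by (simp add: algebra_simps)
      also have "\<dots> \<le> m1 * (Lb * N * (T - t0)) + m2 * (Lb * N * (t - \<tau>))"
        using t m LN by (intro add_mono mult_left_mono) auto
      finally show ?thesis .
    qed
    have LT: "Lb * (t - t0) \<le> Lb * (T - t0)" using t Lb0 by (intro mult_left_mono) auto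
    have E1: "m1 * (\<alpha> * (t - t0) + 2 * k * sqrt (t - t0)) \<le> m1 * (\<alpha> * (T - t0) + 2 * k * sqrt (T - t0))"
      using t m \<alpha>0 k0 by (intro mult_left_mono add_mono) auto
    have nw: "norm (w t) \<le> norm w0 + norm (integral {t0..t} (f t))" unfolding wt by (rule norm_triangle_ineq)
    have eqP: "P * m1 = m1 * (\<alpha> * (T - t0) + 2 * k * sqrt (T - t0)) + 2 * (m1 * (Lb * N * (T - t0)))"
      by (simp add: P_def algebra_simps)
    have eqa: "(a * (t - \<tau>) + b * sqrt (t - \<tau>)) * m2 = m2 * (\<alpha> * (t - \<tau>) + 2 * k * sqrt (t - \<tau>)) + 2 * (m2 * (Lb * N * (t - \<tau>)))"
      by (simp add: a_def b_def algebra_simps)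
    show ?thesis
      unfolding eqa eqP z_def C0_def
      using bA[OF t] bB[OF t] LX LT E1 nw w1 by linarith
  qed
  have P0: "P \<ge> 0" using \<alpha>0 k0 LN T by (simp add: P_def)
  have a0: "a \<ge> 0" using \<alpha>0 LN by (simp add: a_def)
  have b0: "b \<ge> 0" using k0 by (simp add: b_def)
  obtain Z0 where Z0: "\<forall>s\<in>{t0..<T}. z s \<le> Z0"
    using gron[OF cz _ a0 b0 P0 H] by (auto simp: z_def)
  define Z where "Z = max Z0 1"
  have Zp: "Z > 0" by (simp add: Z_def)
  have zZ: "z s \<le> Z" if "s \<in> {t0..<T}" for s
    using Z0 that by (auto simp: Z_def le_max_iff_disj)
  have wZ: "norm (w s) \<le> Z" if "s \<in> {t0..<T}" for s
    using zZ[OF that] norm_ge_zero[of "\<phi>A s"] norm_ge_zero[of "\<phi>B s"] unfolding z_def by linarith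
  have BZ: "norm (\<phi>B s) \<le> Z" if "s \<in> {t0..<T}" for s
    using zZ[OF that] norm_ge_zero[of "\<phi>A s"] norm_ge_zero[of "w s"] unfolding z_def by linarith
  have mi: "(\<lambda>s. (1 / sqrt (e - s)) *\<^sub>R w s) integrable_on {t0..e}" if "e \<in> {t0..<T}" for e
    using that by (intro memint continuous_on_subset[OF w_cont]) auto
  have partI: "\<exists>C>0. \<forall>t1 t2. t0 < t1 \<and> t1 < t2 \<and> t2 < T \<longrightarrow>
            norm (integral {t0..t2} (\<lambda>s. (1 / sqrt (t2 - s)) *\<^sub>R w s)
                  - integral {t0..t1} (\<lambda>s. (1 / sqrt (t1 - s)) *\<^sub>R w s))
              \<le> C * sqrt \<bar>t2 - t1\<bar>"
  proof (intro exI[of _ "4 * Z"] conjI allI impI)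
    show "4 * Z > 0" using Zp by simp
    fix t1 t2 assume tt: "t0 < t1 \<and> t1 < t2 \<and> t2 < T"
    define F1 where "F1 = (\<lambda>s. (1 / sqrt (t1 - s)) *\<^sub>R w s)"
    define F2 where "F2 = (\<lambda>s. (1 / sqrt (t2 - s)) *\<^sub>R w s)"
    have i2: "F2 integrable_on {t0..t2}" unfolding F2_def using tt by (intro mi) auto
    have i1: "F1 integrable_on {t0..t1}" unfolding F1_def using tt by (intro mi) auto
    have i2a: "F2 integrable_on {t0..t1}" by (rule integrable_on_subinterval[OF i2]) (use tt in auto)
    have i2b: "F2 integrable_on {t1..t2}" by (rule integrable_on_subinterval[OF i2]) (use tt in auto)
    have comb: "integral {t0..t1} F2 + integral {t1..t2} F2 = integral {t0..t2} F2"
      using tt by (intro Henstock_Kurzweil_Integration.integral_combine i2) auto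
    have b1: "norm (integral {t1..t2} F2) \<le> Z * (2 * sqrt (t2 - t1))"
    proof -
      have gi: "((\<lambda>s. Z * (1 / sqrt (t2 - s))) has_integral Z * (2 * sqrt (t2 - t1) - 2 * sqrt (t2 - t2))) {t1..t2}"
        using tt by (intro has_integral_mult_right sq_int) auto
      have "norm (integral {t1..t2} F2) \<le> integral {t1..t2} (\<lambda>s. Z * (1 / sqrt (t2 - s)))"
      proof (rule integral_norm_bound_integral[OF i2b])
        show "(\<lambda>s. Z * (1 / sqrt (t2 - s))) integrable_on {t1..t2}" using gi by blast
        fix s assume s: "s \<in> {t1..t2}"
        then have sT: "s \<in> {t0..<T}" using tt by auto
        have "norm (F2 s) = (1 / sqrt (t2 - s)) * norm (w s)" using s by (simp add: F2_def)
        also have "\<dots> \<le> (1 / sqrt (t2 - s)) * Z" using s wZ[OF sT] by (intro mult_left_mono) auto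
        finally show "norm (F2 s) \<le> Z * (1 / sqrt (t2 - s))" by (simp add: mult.commute)
      qed
      also have "\<dots> = Z * (2 * sqrt (t2 - t1))" using integral_unique[OF gi] by simp
      finally show ?thesis .
    qed
    have b2: "norm (integral {t0..t1} F2 - integral {t0..t1} F1) \<le> Z * (2 * sqrt (t2 - t1))"
    proof -
      define g0 where "g0 s = Z * (1 / sqrt (t1 - s)) - Z * (1 / sqrt (t2 - s))" for s
      define g where "g s = (if s = t1 then Z / sqrt (t2 - t1) else g0 s)" for s
      define V where "V = Z * (2 * sqrt (t1 - t0) - 2 * sqrt (t1 - t1)) - Z * (2 * sqrt (t2 - t0) - 2 * sqrt (t2 - t1))"
      have g0i: "(g0 has_integral V) {t0..t1}"
        unfolding g0_def V_def using tt by (intro has_integral_diff has_integral_mult_right sq_int) auto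
      have gi: "(g has_integral V) {t0..t1}"
        by (rule has_integral_spike[OF negligible_sing[of t1] _ g0i]) (auto simp: g_def)
      have "norm (integral {t0..t1} F2 - integral {t0..t1} F1) = norm (integral {t0..t1} (\<lambda>s. F2 s - F1 s))"
        by (simp add: Henstock_Kurzweil_Integration.integral_diff[OF i2a i1])
      also have "\<dots> \<le> integral {t0..t1} g"
      proof (rule integral_norm_bound_integral)
        show "(\<lambda>s. F2 s - F1 s) integrable_on {t0..t1}" by (intro integrable_diff i2a i1)
        show "g integrable_on {t0..t1}" using gi by blast
        fix s assume s: "s \<in> {t0..t1}"
        then have sT: "s \<in> {t0..<T}" using tt by auto
        show "norm (F2 s - F1 s) \<le> g s"
        proof (cases "s = t1")
          case True
          have "norm (F2 s - F1 s) = (1 / sqrt (t2 - t1)) * norm (w s)"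
            using True tt by (simp add: F1_def F2_def)
          also have "\<dots> \<le> (1 / sqrt (t2 - t1)) * Z" using wZ[OF sT] tt by (intro mult_left_mono) auto
          finally show ?thesis using True by (simp add: g_def)
        next
          case False
          then have st: "s < t1" using s by auto
          have le: "1 / sqrt (t2 - s) \<le> 1 / sqrt (t1 - s)"
            using st tt by (intro divide_left_mono) auto
          have "F2 s - F1 s = (1 / sqrt (t2 - s) - 1 / sqrt (t1 - s)) *\<^sub>R w s"
            by (simp add: F1_def F2_def scaleR_diff_left)
          then have "norm (F2 s - F1 s) = (1 / sqrt (t1 - s) - 1 / sqrt (t2 - s)) * norm (w s)"
            using le by simp
          also have "\<dots> \<le> (1 / sqrt (t1 - s) - 1 / sqrt (t2 - s)) * Z"
            using le wZ[OF sT] by (intro mult_left_mono) auto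
          finally show ?thesis using False by (simp add: g_def g0_def algebra_simps)
        qed
      qed
      also have "\<dots> = V" using integral_unique[OF gi] .
      also have "\<dots> \<le> Z * (2 * sqrt (t2 - t1))"
      proof -
        have "sqrt (t1 - t0) \<le> sqrt (t2 - t0)" using tt by simp
        then have "Z * sqrt (t1 - t0) \<le> Z * sqrt (t2 - t0)" using Zp by (intro mult_left_mono) auto
        then show ?thesis by (simp add: V_def algebra_simps)
      qed
      finally show ?thesis .
    qed
    have "integral {t0..t2} F2 - integral {t0..t1} F1
        = (integral {t0..t1} F2 - integral {t0..t1} F1) + integral {t1..t2} F2"
      using comb by (simp add: algebra_simps)
    then have "norm (integral {t0..t2} F2 - integral {t0..t1} F1) \<le> Z * (2 * sqrt (t2 - t1)) + Z * (2 * sqrt (t2 - t1))"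
      using norm_triangle_le[OF add_mono[OF b2 b1]] by (simp only:)
    also have "\<dots> = 4 * Z * sqrt \<bar>t2 - t1\<bar>" using tt by simp
    finally show "norm (integral {t0..t2} (\<lambda>s. (1 / sqrt (t2 - s)) *\<^sub>R w s)
                  - integral {t0..t1} (\<lambda>s. (1 / sqrt (t1 - s)) *\<^sub>R w s))
              \<le> 4 * Z * sqrt \<bar>t2 - t1\<bar>" by (simp add: F1_def F2_def)
  qed
  have partII: "w t0 = 0 \<longrightarrow> ((\<lambda>t. (1 / sqrt (t - t0)) *\<^sub>R w t) \<longlongrightarrow> 0) (at_right t0)"
  proof
    assume w00: "w t0 = 0"
    have "integral {t0..t0} (f t0) = w t0 - w0" using integral_unique[OF fint[OF t0T]] .
    then have w0z: "w0 = 0" using w00 by simp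
    show "((\<lambda>t. (1 / sqrt (t - t0)) *\<^sub>R w t) \<longlongrightarrow> 0) (at_right t0)"
      unfolding tendsto_iff
    proof (intro allI impI)
      fix e :: real assume e: "e > 0"
      define \<eta> where "\<eta> = e / (4 * k)"
      have \<eta>0: "\<eta> > 0" using e k0 by (simp add: \<eta>_def)
      obtain \<delta> where \<delta>: "\<delta> > 0" "\<forall>s\<in>{t0..<T}. dist s t0 < \<delta> \<longrightarrow> dist (w s) (w t0) < \<eta>"
        using continuous_on_iff[THEN iffD1, OF w_cont, rule_format, OF t0T \<eta>0] by blast
      define \<alpha>' where "\<alpha>' = (\<mu> + K) * \<eta> + Z"
      have \<alpha>'0: "\<alpha>' \<ge> 0" using params K0 \<eta>0 Zp by (simp add: \<alpha>'_def)
      define \<rho> where "\<rho> = min (min \<delta> (T - t0)) ((e / (2 * (\<alpha>' + 1)))^2)"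
      have \<rho>0: "\<rho> > 0" using \<delta> T e \<alpha>'0 by (simp add: \<rho>_def)
      show "\<forall>\<^sub>F t in at_right t0. dist ((1 / sqrt (t - t0)) *\<^sub>R w t) 0 < e"
        unfolding eventually_at_right_field
      proof (intro exI[of _ "t0 + \<rho>"] conjI allI impI)
        show "t0 + \<rho> > t0" using \<rho>0 by simp
        fix t assume tt: "t0 < t" "t < t0 + \<rho>"
        have tT: "t \<in> {t0..<T}" using tt by (auto simp: \<rho>_def)
        have wsmall: "norm (w s) \<le> \<eta>" if "s \<in> {t0..t}" for s
        proof -
          have "s \<in> {t0..<T}" "dist s t0 < \<delta>" using that tt tT by (auto simp: \<rho>_def dist_real_def)
          then show ?thesis using \<delta>(2) w00 by (auto simp: dist_norm)
        qed
        have fi: "f t integrable_on {t0..t}" using fint[OF tT] by blast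
        have nI: "norm (integral {t0..t} (f t)) \<le> 1 * (\<alpha>' * (t - t0) + 2 * (k * \<eta>) * sqrt (t - t0)) + 1 * (\<alpha>' * (t - t) + 2 * (k * \<eta>) * sqrt (t - t))"
        proof (rule split_bound[OF fi _ _ \<alpha>'0, of t "k * \<eta>" 1 1 "\<lambda>_. 1"])
          fix s assume s: "s \<in> {t0..t}"
          then have sT: "s \<in> {t0..<T}" using tT by auto
          have sq: "k / sqrt (t - s) \<ge> 0" using s k0 by auto
          have "(\<mu> + K) * norm (w s) \<le> (\<mu> + K) * \<eta>" using wsmall[OF s] params K0 by (intro mult_left_mono) auto
          moreover have "(k / sqrt (t - s)) * norm (w s) \<le> (k / sqrt (t - s)) * \<eta>"
            using wsmall[OF s] sq by (intro mult_left_mono) auto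
          ultimately show "norm (f t s) \<le> (\<alpha>' + k * \<eta> / sqrt (t - s)) * 1"
            using fb0[OF tT s] BZ[OF sT] by (simp add: \<alpha>'_def algebra_simps)
        qed (use tt k0 \<eta>0 in auto)
        have wt: "w t = integral {t0..t} (f t)" using integral_unique[OF fint[OF tT]] w0z by simp
        have sq0: "sqrt (t - t0) > 0" using tt by simp
        have "norm ((1 / sqrt (t - t0)) *\<^sub>R w t) = norm (w t) / sqrt (t - t0)" using sq0 by simp
        also have "\<dots> \<le> (\<alpha>' * (t - t0) + 2 * (k * \<eta>) * sqrt (t - t0)) / sqrt (t - t0)"
          using nI wt sq0 by (intro divide_right_mono) auto
        also have "\<dots> = \<alpha>' * sqrt (t - t0) + 2 * (k * \<eta>)"
        proof -
          have "t - t0 = sqrt (t - t0) * sqrt (t - t0)" using tt by simp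
          then show ?thesis using sq0 by (simp add: field_simps)
        qed
        also have "\<dots> < e"
        proof -
          have "t - t0 < (e / (2 * (\<alpha>' + 1)))^2" using tt by (auto simp: \<rho>_def)
          then have "sqrt (t - t0) < sqrt ((e / (2 * (\<alpha>' + 1)))^2)" by (rule real_sqrt_less_mono)
          also have "\<dots> = e / (2 * (\<alpha>' + 1))" using e \<alpha>'0 by simp
          finally have s1: "sqrt (t - t0) < e / (2 * (\<alpha>' + 1))" .
          have "\<alpha>' * sqrt (t - t0) \<le> (\<alpha>' + 1) * sqrt (t - t0)" using sq0 by (intro mult_right_mono) auto
          also have "\<dots> < (\<alpha>' + 1) * (e / (2 * (\<alpha>' + 1)))" using s1 \<alpha>'0 by (intro mult_strict_left_mono) auto
          also have "\<dots> = e / 2" using \<alpha>'0 by (simp add: field_simps)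
          finally have "\<alpha>' * sqrt (t - t0) < e / 2" .
          moreover have "2 * (k * \<eta>) = e / 2" using k0 by (simp add: \<eta>_def field_simps)
          ultimately show ?thesis by linarith
        qed
        finally show "dist ((1 / sqrt (t - t0)) *\<^sub>R w t) 0 < e" by simp
      qed
    qed
  qed
  show ?thesis using partI partII by blast
qed

end
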